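(* (1) Let $\nu=\sum_{k=1}^m\lambda_k\delta_{a_k}$ be a probability measure with $\lambda_k>0$, $\sum_k\lambda_k=1$ and $a_1<a_2<\cdots<a_m$. For any $b\in\mathbb{R}$, $b\neq0$, the measure $\delta_b\rhd\nu$ has exactly $m$ distinct atoms (and no other mass). Writing $\delta_b\rhd\nu=\sum_{k=1}^m\mu_k\delta_{b_k}$ with $b_1<\cdots<b_m$, the atoms satisfy either $b_1<a_1<b_2<a_2<\cdots<a_{m-1}<b_m<a_m$ or $a_1<b_1<a_2<b_2<\cdots<a_m<b_m$, and the weights are $\mu_i=\frac{\prod_{k=1}^m(b_i-a_k)}{b\prod_{k\neq i}(b_i-b_k)}$. (2) Moreover, if $b$ and $c$ are distinct real numbers, the $2m$ atoms appearing in $\delta_b\rhd\nu$ and $\delta_c\rhd\nu$ are all different.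
   Context: For a probability measure $\mu$ on $\mathbb{R}$, $G_\mu(z)=\int\frac{1}{z-x}d\mu(x)$ on $\mathbb{C}^+$ and $H_\mu=1/G_\mu$. The monotone convolution $\mu\rhd\nu$ is the unique probability measure with $H_{\mu\rhd\nu}=H_\mu\circ H_\nu$. In particular $H_{\delta_b\rhd\nu}=H_\nu-b$. *)

theory Defs
  imports "HOL-Probability.Probability"
begin

definition cauchy_G :: "real measure \<Rightarrow> complex \<Rightarrow> complex" where
  "cauchy_G M z = (\<integral>x. 1 / (z - complex_of_real x) \<partial>M)"

definition cauchy_H :: "real measure \<Rightarrow> complex \<Rightarrow> complex" where
  "cauchy_H M z = 1 / cauchy_G M z"

definition mono_conv :: "real measure \<Rightarrow> real measure \<Rightarrow> real measure" where
  "mono_conv \<mu> \<nu> = (THE \<rho>. prob_space \<rho> \<and> sets \<rho> = sets borel \<and>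
      (\<forall>z. 0 < Im z \<longrightarrow> cauchy_H \<rho> z = cauchy_H \<mu> (cauchy_H \<nu> z)))"

definition atoms_measure :: "(nat \<Rightarrow> real) \<Rightarrow> (nat \<Rightarrow> real) \<Rightarrow> nat \<Rightarrow> real measure" where
  "atoms_measure w x m = measure_of UNIV (sets borel)
      (\<lambda>A. \<Sum>k\<in>{1..m}. ennreal (w k) * indicator A (x k))"

definition atoms_of :: "real measure \<Rightarrow> real set" where
  "atoms_of M = {x. 0 < emeasure M {x}}"

end

theory Submission
  imports Defs "HOL-Computational_Algebra.Polynomial"
begin

definition DD :: "(nat \<Rightarrow> real) \<Rightarrow> (nat \<Rightarrow> real) \<Rightarrow> nat \<Rightarrow> real measure" where
  "DD w x m = distr (density (count_space {1..m}) (\<lambda>k. ennreal (w k))) borel x"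

lemma emeasure_DD:
  assumes "A \<in> sets borel"
  shows "emeasure (DD w x m) A = (\<Sum>k\<in>{1..m}. ennreal (w k) * indicator A (x k))"
proof -
  have "emeasure (DD w x m) A = emeasure (density (count_space {1..m}) (\<lambda>k. ennreal (w k))) (x -` A \<inter> {1..m})"
    unfolding DD_def using assms by (subst emeasure_distr) auto
  also have "\<dots> = (\<integral>\<^sup>+k. ennreal (w k) * indicator (x -` A \<inter> {1..m}) k \<partial>count_space {1..m})"
    by (subst emeasure_density) auto
  also have "\<dots> = (\<Sum>k\<in>{1..m}. ennreal (w k) * indicator A (x k))"
    by (subst nn_integral_count_space_finite) (auto intro!: sum.cong simp: indicator_def)
  finally show ?thesis .
qed

lemma atoms_measure_DD: "atoms_measure w x m = DD w x m"
proof -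
  have sp: "space (DD w x m) = UNIV" and st: "sets (DD w x m) = sets borel" by (auto simp: DD_def)
  have "atoms_measure w x m = measure_of UNIV (sets borel) (emeasure (DD w x m))"
    unfolding atoms_measure_def
    by (rule measure_of_eq) (auto simp: emeasure_DD sets.sigma_sets_eq[of borel, simplified])
  also have "\<dots> = DD w x m" using measure_of_of_measure[of "DD w x m"] sp st by simp
  finally show ?thesis .
qed

lemma integral_DD:
  fixes f :: "real \<Rightarrow> 'b::{banach, second_countable_topology}"
  assumes "f \<in> borel_measurable borel" "\<forall>k\<in>{1..m}. 0 \<le> w k"
  shows "(\<integral>t. f t \<partial>DD w x m) = (\<Sum>k\<in>{1..m}. w k *\<^sub>R f (x k))"
proof -
  have "(\<integral>t. f t \<partial>DD w x m) = (\<integral>k. f (x k) \<partial>density (count_space {1..m}) (\<lambda>k. ennreal (w k)))"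
    unfolding DD_def using assms by (subst integral_distr) auto
  also have "\<dots> = (\<integral>k. w k *\<^sub>R f (x k) \<partial>count_space {1..m})"
    using assms by (subst integral_density) (auto simp: AE_count_space)
  also have "\<dots> = (\<Sum>k\<in>{1..m}. w k *\<^sub>R f (x k))"
    by (simp add: lebesgue_integral_count_space_finite)
  finally show ?thesis .
qed

lemma point_limit:
  assumes "prob_space M" "sets M = sets borel"
  shows "(\<lambda>n. \<i> * of_real (1 / Suc n) * cauchy_G M (of_real t0 + \<i> * of_real (1 / Suc n)))
          \<longlonglongrightarrow> complex_of_real (measure M {t0})"
proof -
  interpret prob_space M by fact
  define y where "y n = 1 / real (Suc n)" for n
  define s where "s n t = \<i> * of_real (y n) / (of_real t0 + \<i> * of_real (y n) - of_real t)" for n t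
  have ypos: "y n > 0" for n by (simp add: y_def)
  have meas[measurable]: "s n \<in> borel_measurable M" for n
    unfolding s_def using assms(2) by (simp add: measurable_cong_sets[OF assms(2) refl])
  have "(\<lambda>n. integral\<^sup>L M (s n)) \<longlonglongrightarrow> integral\<^sup>L M (\<lambda>t. complex_of_real (indicator {t0} t))"
  proof (rule integral_dominated_convergence[where w="\<lambda>_. 1"])
    show "(\<lambda>t. complex_of_real (indicator {t0} t)) \<in> borel_measurable M"
      using assms(2) by (simp add: measurable_cong_sets[OF assms(2) refl])
    show "integrable M (\<lambda>_. 1::real)" by simp
    show "AE t in M. (\<lambda>n. s n t) \<longlonglongrightarrow> complex_of_real (indicator {t0} t)"
    proof (rule AE_I2)
      fix t
      have y0: "(\<lambda>n. y n) \<longlonglongrightarrow> 0" unfolding y_def by (rule LIMSEQ_inverse_real_of_nat[simplified inverse_eq_divide])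
      show "(\<lambda>n. s n t) \<longlonglongrightarrow> complex_of_real (indicator {t0} t)"
      proof (cases "t = t0")
        case True
        then have "s n t = 1" for n using ypos[of n] by (simp add: s_def)
        then show ?thesis using True by simp
      next
        case False
        have "(\<lambda>n. \<i> * of_real (y n) / (of_real t0 + \<i> * of_real (y n) - of_real t))
              \<longlonglongrightarrow> \<i> * of_real 0 / (of_real t0 + \<i> * of_real 0 - of_real t)"
          using False y0 by (intro tendsto_intros) auto
        then show ?thesis using False by (simp add: s_def)
      qed
    qed
    show "AE t in M. norm (s n t) \<le> 1" for n
    proof (rule AE_I2)
      fix t
      have "norm (\<i> * of_real (y n)) \<le> norm (of_real t0 + \<i> * of_real (y n) - of_real t)"
      proof -
        have "norm (\<i> * of_real (y n)) = \<bar>Im (of_real t0 + \<i> * of_real (y n) - of_real t)\<bar>"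
          using ypos[of n] by (simp add: norm_mult)
        also have "\<dots> \<le> norm (of_real t0 + \<i> * of_real (y n) - of_real t)" by (rule abs_Im_le_cmod)
        finally show ?thesis .
      qed
      moreover have "of_real t0 + \<i> * of_real (y n) - of_real t \<noteq> 0"
        using ypos[of n] by (auto simp: complex_eq_iff)
      ultimately show "norm (s n t) \<le> 1" by (simp add: s_def norm_divide divide_le_eq_1)
    qed
  qed (rule meas)
  moreover have "integral\<^sup>L M (s n) = \<i> * of_real (1 / Suc n) * cauchy_G M (of_real t0 + \<i> * of_real (1 / Suc n))" for n
    unfolding cauchy_G_def s_def y_def by (simp add: divide_inverse)
  moreover have "integral\<^sup>L M (\<lambda>t. complex_of_real (indicator {t0} t)) = complex_of_real (measure M {t0})"
    using assms(2) by (simp add: sets_eq_imp_space_eq)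
  ultimately show ?thesis by simp
qed

lemma prob_DD:
  assumes "\<forall>k\<in>{1..m}. 0 \<le> w k" "(\<Sum>k=1..m. w k) = 1"
  shows "prob_space (DD w x m)"
proof
  have "emeasure (DD w x m) (space (DD w x m)) = (\<Sum>k\<in>{1..m}. ennreal (w k))"
    using emeasure_DD[of UNIV w x m] by (simp add: DD_def[symmetric]) (simp add: DD_def)
  also have "\<dots> = ennreal (\<Sum>k\<in>{1..m}. w k)" using assms(1) by (intro sum_ennreal) auto
  finally show "emeasure (DD w x m) (space (DD w x m)) = 1" using assms(2) by simp
qed

lemma finite_support_measure:
  fixes M :: "real measure"
  assumes "prob_space M" "sets M = sets borel" "finite B" "measure M B = 1" "A \<in> sets borel"
  shows "measure M A = (\<Sum>b\<in>A \<inter> B. measure M {b})"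
proof -
  interpret prob_space M by fact
  have "closed B" using assms(3) by (rule finite_imp_closed)
  then have B: "B \<in> sets M" using assms(2) by (simp add: borel_closed)
  have A: "A \<in> sets M" using assms by simp
  have "measure M (A - B) \<le> measure M (space M - B)"
    using A B sets.sets_into_space by (intro finite_measure_mono) auto
  also have "\<dots> = 0" using prob_compl[OF B] assms(4) by simp
  finally have "measure M (A - B) = 0" by (simp add: antisym)
  moreover have "measure M A = measure M (A \<inter> B) + measure M (A - B)"
    using A B by (subst finite_measure_Diff') (auto simp: Int_commute)
  moreover have "measure M (A \<inter> B) = (\<Sum>b\<in>A \<inter> B. measure M {b})"
    using assms(2,3) by (intro finite_measure_eq_sum_singleton) auto
  ultimately show ?thesis by simp
qed

lemma measure_DD_point:
  assumes "\<forall>k\<in>{1..m}. 0 \<le> w k" "inj_on x {1..m}" "i \<in> {1..m}"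
  shows "measure (DD w x m) {x i} = w i"
proof -
  have z: "ennreal (w k) * indicator {x i} (x k) = 0" if "k \<in> {1..m} - {i}" for k
  proof -
    have "x k \<noteq> x i" using that assms(2,3) inj_on_eq_iff[OF assms(2)] by blast
    then show ?thesis by simp
  qed
  have "emeasure (DD w x m) {x i} = (\<Sum>k\<in>{1..m}. ennreal (w k) * indicator {x i} (x k))"
    by (rule emeasure_DD) simp
  also have "\<dots> = (\<Sum>k\<in>{i}. ennreal (w k) * indicator {x i} (x k))"
    using assms(3) z by (intro sum.mono_neutral_right) auto
  also have "\<dots> = ennreal (w i)" by simp
  finally show ?thesis using assms(1,3) by (simp add: measure_def)
qed

lemma unique_DD:
  assumes "prob_space M" "sets M = sets borel"
    and w: "\<forall>k\<in>{1..m}. 0 < w k" "(\<Sum>k=1..m. w k) = 1" and inj: "inj_on x {1..m}"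
    and G: "\<forall>z. 0 < Im z \<longrightarrow> cauchy_G M z = cauchy_G (DD w x m) z"
  shows "M = DD w x m"
proof -
  let ?S = "DD w x m"
  have w0: "\<forall>k\<in>{1..m}. 0 \<le> w k" using w by auto
  have pS: "prob_space ?S" using prob_DD[OF w0 w(2)] .
  have sS: "sets ?S = sets borel" by (simp add: DD_def)
  have pt: "measure M {t} = measure ?S {t}" for t
  proof -
    have E: "(\<lambda>n. \<i> * of_real (1 / Suc n) * cauchy_G M (of_real t + \<i> * of_real (1 / Suc n))) =
          (\<lambda>n. \<i> * of_real (1 / Suc n) * cauchy_G ?S (of_real t + \<i> * of_real (1 / Suc n)))"
    proof (rule ext)
      fix n
      have "0 < Im (of_real t + \<i> * of_real (1 / Suc n))" by simp
      from G[rule_format, OF this] show "\<i> * of_real (1 / Suc n) * cauchy_G M (of_real t + \<i> * of_real (1 / Suc n)) = \<i> * of_real (1 / Suc n) * cauchy_G ?S (of_real t + \<i> * of_real (1 / Suc n))"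
        by (simp only:)
    qed
    have L2: "(\<lambda>n. \<i> * of_real (1 / Suc n) * cauchy_G M (of_real t + \<i> * of_real (1 / Suc n))) \<longlonglongrightarrow> complex_of_real (measure ?S {t})"
      by (subst E) (rule point_limit[OF pS sS])
    have "complex_of_real (measure M {t}) = complex_of_real (measure ?S {t})"
      by (rule LIMSEQ_unique[OF point_limit[OF assms(1,2)] L2])
    then show ?thesis by simp
  qed
  define B where "B = x ` {1..m}"
  have fB: "finite B" by (simp add: B_def)
  have SB: "measure ?S B = (\<Sum>b\<in>B. measure ?S {b})"
    by (rule finite_measure.finite_measure_eq_sum_singleton[OF prob_space.finite_measure[OF pS] fB]) (simp add: sS)
  also have "\<dots> = (\<Sum>k\<in>{1..m}. measure ?S {x k})" unfolding B_def using inj by (simp add: sum.reindex)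
  also have "\<dots> = (\<Sum>k\<in>{1..m}. w k)" using measure_DD_point[OF w0 inj] by (intro sum.cong) auto
  also have "\<dots> = 1" by (rule w(2))
  finally have S1: "measure ?S B = 1" .
  have "measure M B = (\<Sum>b\<in>B. measure M {b})"
    by (rule finite_measure.finite_measure_eq_sum_singleton[OF prob_space.finite_measure[OF assms(1)] fB]) (simp add: assms(2))
  also have "\<dots> = (\<Sum>b\<in>B. measure ?S {b})" by (simp add: pt)
  also have "\<dots> = measure ?S B" using SB by simp
  finally have M1: "measure M B = 1" using S1 by simp
  show ?thesis
  proof (rule measure_eqI)
    show "sets M = sets ?S" using assms(2) sS by simp
    fix A assume "A \<in> sets M"
    then have A: "A \<in> sets borel" using assms(2) by simp
    have "measure M A = measure ?S A"
      using finite_support_measure[OF assms(1,2) fB M1 A] finite_support_measure[OF pS sS fB S1 A]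
      by (simp add: pt)
    then show "emeasure M A = emeasure ?S A"
      using finite_measure.emeasure_eq_measure[OF prob_space.finite_measure[OF assms(1)], of A]
                    finite_measure.emeasure_eq_measure[OF prob_space.finite_measure[OF pS], of A]
      by metis
  qed
qed

lemma frac_sum:
  fixes z :: "'a::field"
  assumes "finite K" "\<forall>k\<in>K. z \<noteq> c k"
  shows "(\<Sum>k\<in>K. w k / (z - c k)) = (\<Sum>k\<in>K. w k * (\<Prod>j\<in>K-{k}. z - c j)) / (\<Prod>j\<in>K. z - c j)"
proof -
  have nz: "(\<Prod>j\<in>K. z - c j) \<noteq> 0" using assms by simp
  have "w k / (z - c k) = w k * (\<Prod>j\<in>K-{k}. z - c j) / (\<Prod>j\<in>K. z - c j)" if "k \<in> K" for k
  proof -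
    have eq: "(\<Prod>j\<in>K. z - c j) = (z - c k) * (\<Prod>j\<in>K-{k}. z - c j)"
      using that assms(1) by (simp add: prod.remove)
    have R: "(\<Prod>j\<in>K-{k}. z - c j) \<noteq> 0" using assms by simp
    show ?thesis unfolding eq using R by simp
  qed
  then have "(\<Sum>k\<in>K. w k / (z - c k)) = (\<Sum>k\<in>K. w k * (\<Prod>j\<in>K-{k}. z - c j) / (\<Prod>j\<in>K. z - c j))"
    by (rule sum.cong[OF refl])
  also have "\<dots> = (\<Sum>k\<in>K. w k * (\<Prod>j\<in>K-{k}. z - c j)) / (\<Prod>j\<in>K. z - c j)" by (simp add: sum_divide_distrib)
  finally show ?thesis .
qed

definition prodlin :: "(nat \<Rightarrow> complex) \<Rightarrow> nat set \<Rightarrow> complex poly" where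
  "prodlin c S = (\<Prod>j\<in>S. [:- c j, 1:])"

lemma poly_prodlin [simp]: "poly (prodlin c S) z = (\<Prod>j\<in>S. z - c j)"
  by (simp add: prodlin_def poly_prod)

lemma degree_prodlin: "finite S \<Longrightarrow> degree (prodlin c S) = card S"
  unfolding prodlin_def by (subst degree_prod_eq_sum_degree) auto

lemma lead_prodlin: "finite S \<Longrightarrow> coeff (prodlin c S) (card S) = 1"
proof -
  assume "finite S"
  then have "coeff (prodlin c S) (card S) = lead_coeff (prodlin c S)" by (simp add: degree_prodlin)
  also have "\<dots> = 1" unfolding prodlin_def lead_coeff_prod by simp
  finally show ?thesis .
qed

lemma lagrange:
  fixes c :: "nat \<Rightarrow> complex" and p :: "complex poly"
  assumes inj: "inj_on c {1..m}" and deg: "degree p < m"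
  shows "p = (\<Sum>i\<in>{1..m}. smult (poly p (c i) / (\<Prod>k\<in>{1..m}-{i}. c i - c k)) (prodlin c ({1..m}-{i})))"
    (is "p = ?L")
proof (rule poly_eqI_degree[where A = "c ` {1..m}"])
  have cardA: "card (c ` {1..m}) = m" using inj by (simp add: card_image)
  show "card (c ` {1..m}) > degree p" using cardA deg by simp
  have "degree ?L \<le> m - 1"
  proof (rule degree_sum_le)
    fix i assume i: "i \<in> {1..m}"
    have "degree (smult (poly p (c i) / (\<Prod>k\<in>{1..m}-{i}. c i - c k)) (prodlin c ({1..m}-{i})))
          \<le> degree (prodlin c ({1..m}-{i}))" by (rule degree_smult_le)
    also have "\<dots> = m - 1" using i by (simp add: degree_prodlin)
    finally show "degree (smult (poly p (c i) / (\<Prod>k\<in>{1..m}-{i}. c i - c k)) (prodlin c ({1..m}-{i}))) \<le> m - 1" .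
  qed simp
  then show "card (c ` {1..m}) > degree ?L" using cardA deg by simp
  fix z assume "z \<in> c ` {1..m}"
  then obtain j where j: "j \<in> {1..m}" "z = c j" by auto
  have ne: "c j \<noteq> c k" if "k \<in> {1..m}" "k \<noteq> j" for k using inj j(1) that unfolding inj_on_def by metis
  have "poly ?L z = (\<Sum>i\<in>{1..m}. poly p (c i) / (\<Prod>k\<in>{1..m}-{i}. c i - c k) * (\<Prod>k\<in>{1..m}-{i}. c j - c k))"
    using j by (simp add: poly_sum)
  also have "\<dots> = (\<Sum>i\<in>{j}. poly p (c i) / (\<Prod>k\<in>{1..m}-{i}. c i - c k) * (\<Prod>k\<in>{1..m}-{i}. c j - c k))"
  proof (rule sum.mono_neutral_right)
    show "\<forall>i\<in>{1..m} - {j}. poly p (c i) / (\<Prod>k\<in>{1..m}-{i}. c i - c k) * (\<Prod>k\<in>{1..m}-{i}. c j - c k) = 0"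
    proof
      fix i assume i: "i \<in> {1..m} - {j}"
      have "(\<Prod>k\<in>{1..m}-{i}. c j - c k) = 0"
        by (rule prod_zero) (use i j in auto)
      then show "poly p (c i) / (\<Prod>k\<in>{1..m}-{i}. c i - c k) * (\<Prod>k\<in>{1..m}-{i}. c j - c k) = 0" by simp
    qed
  qed (use j in auto)
  also have "\<dots> = poly p (c j)"
  proof -
    have "(\<Prod>k\<in>{1..m}-{j}. c j - c k) \<noteq> 0" using ne by auto
    then show ?thesis by simp
  qed
  finally show "poly p z = poly ?L z" using j by simp
qed

lemma factor_monic:
  fixes c :: "nat \<Rightarrow> complex" and p :: "complex poly"
  assumes inj: "inj_on c {1..m}" and deg: "degree p \<le> m" and lc: "coeff p m = 1"
    and roots: "\<forall>i\<in>{1..m}. poly p (c i) = 0"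
  shows "p = prodlin c {1..m}"
proof (rule poly_eqI_degree_lead_coeff[where n = m and A = "c ` {1..m}"])
  show "coeff p m = coeff (prodlin c {1..m}) m" using lc lead_prodlin[of "{1..m}" c] by simp
  show "m \<le> card (c ` {1..m})" using inj by (simp add: card_image)
  show "degree p \<le> m" by fact
  show "degree (prodlin c {1..m}) \<le> m" by (simp add: degree_prodlin)
  fix z assume "z \<in> c ` {1..m}"
  then obtain j where j: "j \<in> {1..m}" "z = c j" by auto
  have "(\<Prod>k\<in>{1..m}. c j - c k) = 0" by (rule prod_zero) (use j in auto)
  then show "poly p z = poly (prodlin c {1..m}) z" using roots j by simp
qed

definition Qr :: "(nat \<Rightarrow> real) \<Rightarrow> nat \<Rightarrow> real \<Rightarrow> real" where
  "Qr a m x = (\<Prod>k\<in>{1..m}. x - a k)"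
definition Pr :: "(nat \<Rightarrow> real) \<Rightarrow> (nat \<Rightarrow> real) \<Rightarrow> nat \<Rightarrow> real \<Rightarrow> real" where
  "Pr lam a m x = (\<Sum>k\<in>{1..m}. lam k * (\<Prod>j\<in>{1..m}-{k}. x - a j))"
definition Fr :: "(nat \<Rightarrow> real) \<Rightarrow> (nat \<Rightarrow> real) \<Rightarrow> nat \<Rightarrow> real \<Rightarrow> real \<Rightarrow> real" where
  "Fr lam a m b x = Qr a m x - b * Pr lam a m x"

lemma mono_seq:
  fixes f :: "nat \<Rightarrow> real"
  assumes "\<forall>k\<in>{1..<m}. f k < f (Suc k)" "1 \<le> i" "i < j" "j \<le> m"
  shows "f i < f j"
  using assms(3,4)
proof (induction j)
  case 0 then show ?case by simp
next
  case (Suc j)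
  show ?case
  proof (cases "i = j")
    case True
    then show ?thesis using assms(1,2) Suc.prems by auto
  next
    case False
    then have "f i < f j" using Suc by simp
    moreover have "f j < f (Suc j)" using assms(1,2) Suc.prems False by auto
    ultimately show ?thesis by simp
  qed
qed

lemma mono_seq_le:
  fixes f :: "nat \<Rightarrow> real"
  assumes "\<forall>k\<in>{1..<m}. f k < f (Suc k)" "1 \<le> i" "i \<le> j" "j \<le> m"
  shows "f i \<le> f j"
  using mono_seq[OF assms(1,2) _ assms(4)] assms(3) by (cases "i = j") auto

lemma mono_seq_inj:
  fixes f :: "nat \<Rightarrow> real"
  assumes "\<forall>k\<in>{1..<m}. f k < f (Suc k)"
  shows "inj_on f {1..m}"
proof (rule inj_onI)
  fix i j assume ij: "i \<in> {1..m}" "j \<in> {1..m}" "f i = f j"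
  show "i = j"
  proof (rule ccontr)
    assume "i \<noteq> j"
    then have "i < j \<or> j < i" by arith
    then show False using mono_seq[OF assms, of i j] mono_seq[OF assms, of j i] ij by auto
  qed
qed

lemma prod_sign:
  fixes f :: "nat \<Rightarrow> real"
  assumes "finite S" "\<forall>j\<in>S. f j \<noteq> 0"
  shows "0 < (-1) ^ card {j\<in>S. f j < 0} * prod f S"
  using assms
proof (induction S rule: finite_induct)
  case empty then show ?case by simp
next
  case (insert i S)
  have IH: "0 < (-1) ^ card {j\<in>S. f j < 0} * prod f S" using insert by simp
  have fin: "finite {j\<in>S. f j < 0}" using insert by simp
  show ?case
  proof (cases "f i < 0")
    case True
    then have "{j\<in>insert i S. f j < 0} = insert i {j\<in>S. f j < 0}" by auto
    then have "card {j\<in>insert i S. f j < 0} = Suc (card {j\<in>S. f j < 0})"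
      using fin insert(2) by simp
    then have E: "(-1) ^ card {j\<in>insert i S. f j < 0} * prod f (insert i S) =
               (- f i) * ((-1) ^ card {j\<in>S. f j < 0} * prod f S)"
      using insert(1,2) by simp
    show ?thesis unfolding E by (rule mult_pos_pos) (use IH True in auto)
  next
    case False
    then have fi: "f i > 0" using insert(4) by force
    from False have "{j\<in>insert i S. f j < 0} = {j\<in>S. f j < 0}" by auto
    then have E: "(-1) ^ card {j\<in>insert i S. f j < 0} * prod f (insert i S) =
               f i * ((-1) ^ card {j\<in>S. f j < 0} * prod f S)"
      using insert(1,2) by simp
    show ?thesis unfolding E by (rule mult_pos_pos) (use IH fi in auto)
  qed
qed

lemma neg1_sq: "(-1::real) ^ n * (-1) ^ n = 1"
  by (simp add: power_add[symmetric])

context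
  fixes m :: nat and lam a :: "nat \<Rightarrow> real"
  assumes m1: "1 \<le> m" and lpos: "\<forall>k\<in>{1..m}. 0 < lam k" and lsum: "(\<Sum>k=1..m. lam k) = 1"
    and amono: "\<forall>k\<in>{1..<m}. a k < a (Suc k)"
begin

lemma a_lt: "1 \<le> i \<Longrightarrow> i < j \<Longrightarrow> j \<le> m \<Longrightarrow> a i < a j"
  using mono_seq[OF amono] by blast

lemma a_le: "1 \<le> i \<Longrightarrow> i \<le> j \<Longrightarrow> j \<le> m \<Longrightarrow> a i \<le> a j"
  using mono_seq_le[OF amono] by blast

lemma Pr_at_a:
  assumes k: "k \<in> {1..m}"
  shows "Pr lam a m (a k) = lam k * (\<Prod>j\<in>{1..m}-{k}. a k - a j)"
proof -
  have "Pr lam a m (a k) = (\<Sum>i\<in>{k}. lam i * (\<Prod>j\<in>{1..m}-{i}. a k - a j))"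
    unfolding Pr_def
  proof (rule sum.mono_neutral_right)
    show "\<forall>i\<in>{1..m} - {k}. lam i * (\<Prod>j\<in>{1..m}-{i}. a k - a j) = 0"
    proof
      fix i assume i: "i \<in> {1..m} - {k}"
      have "(\<Prod>j\<in>{1..m}-{i}. a k - a j) = 0" by (rule prod_zero) (use i k in auto)
      then show "lam i * (\<Prod>j\<in>{1..m}-{i}. a k - a j) = 0" by simp
    qed
  qed (use k in auto)
  then show ?thesis by simp
qed

lemma Pr_at_a_sign:
  assumes k: "k \<in> {1..m}"
  shows "0 < (-1) ^ (m - k) * Pr lam a m (a k)"
proof -
  have ne: "\<forall>j\<in>{1..m}-{k}. a k - a j \<noteq> 0"
  proof
    fix j assume j: "j \<in> {1..m}-{k}"
    then have "j < k \<or> k < j" by auto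
    then show "a k - a j \<noteq> 0" using a_lt[of j k] a_lt[of k j] j k by auto
  qed
  have "{j\<in>{1..m}-{k}. a k - a j < 0} = {k<..m}"
  proof (intro equalityI subsetI)
    fix j assume "j \<in> {j\<in>{1..m}-{k}. a k - a j < 0}"
    then have j: "j \<in> {1..m}" "j \<noteq> k" "a k < a j" by auto
    have "\<not> j < k" using a_lt[of j k] j k by auto
    then show "j \<in> {k<..m}" using j by auto
  next
    fix j assume j: "j \<in> {k<..m}"
    then show "j \<in> {j\<in>{1..m}-{k}. a k - a j < 0}" using a_lt[of k j] k by auto
  qed
  then have "0 < (-1) ^ (m - k) * (\<Prod>j\<in>{1..m}-{k}. a k - a j)"
    using prod_sign[of "{1..m}-{k}" "\<lambda>j. a k - a j"] ne by simp
  then show ?thesis using lpos k by (simp add: Pr_at_a mult.left_commute)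
qed

lemma Fr_at_a: "k \<in> {1..m} \<Longrightarrow> Fr lam a m b (a k) = - b * Pr lam a m (a k)"
proof -
  assume k: "k \<in> {1..m}"
  have "Qr a m (a k) = 0" unfolding Qr_def by (rule prod_zero) (use k in auto)
  then show ?thesis by (simp add: Fr_def)
qed

lemma Fr_cont: "isCont (Fr lam a m b) x"
  unfolding Fr_def Qr_def Pr_def by (intro continuous_intros)

lemma ivt_root:
  assumes "u < v" "Fr lam a m b u * Fr lam a m b v < 0"
  shows "\<exists>r. u < r \<and> r < v \<and> Fr lam a m b r = 0"
proof -
  let ?F = "Fr lam a m b"
  have c: "\<forall>x. u \<le> x \<and> x \<le> v \<longrightarrow> isCont ?F x" using Fr_cont by blast
  have nz: "?F u \<noteq> 0" "?F v \<noteq> 0" using assms(2) by auto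
  have "\<exists>r\<ge>u. r \<le> v \<and> ?F r = 0"
  proof (cases "?F u < 0")
    case True
    then have "?F v > 0" using assms(2) by (simp add: mult_less_0_iff)
    then show ?thesis using IVT[of ?F u 0 v] True c assms(1) by auto
  next
    case False
    then have "?F u > 0" "?F v < 0" using assms(2) nz by (auto simp: mult_less_0_iff)
    then show ?thesis using IVT2[of ?F v 0 u] c assms(1) by auto
  qed
  then obtain r where "u \<le> r" "r \<le> v" "?F r = 0" by blast
  moreover have "r \<noteq> u" "r \<noteq> v" using nz \<open>?F r = 0\<close> by auto
  ultimately show ?thesis by force
qed

lemma root_between:
  assumes k: "k \<in> {1..<m}" and that: "b \<noteq> 0"
  shows "\<exists>r. a k < r \<and> r < a (Suc k) \<and> Fr lam a m b r = 0"
proof (rule ivt_root)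
  show "a k < a (Suc k)" using amono k by auto
  define n where "n = m - Suc k"
  have mk: "m - k = Suc n" using k unfolding n_def by simp arith
  have h1: "0 < (-1) ^ Suc n * Pr lam a m (a k)" using Pr_at_a_sign[of k] k mk by simp
  have h2: "0 < (-1) ^ n * Pr lam a m (a (Suc k))" using Pr_at_a_sign[of "Suc k"] k by (simp add: n_def)
  have "0 < ((-1) ^ Suc n * Pr lam a m (a k)) * ((-1) ^ n * Pr lam a m (a (Suc k)))"
    by (rule mult_pos_pos[OF h1 h2])
  also have "\<dots> = - (((-1) ^ n * (-1) ^ n) * (Pr lam a m (a k) * Pr lam a m (a (Suc k))))"
    by (simp add: algebra_simps)
  also have "\<dots> = - (Pr lam a m (a k) * Pr lam a m (a (Suc k)))" by (simp only: neg1_sq mult_1_left)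
  finally have "Pr lam a m (a k) * Pr lam a m (a (Suc k)) < 0" by simp
  moreover have "Fr lam a m b (a k) * Fr lam a m b (a (Suc k)) = b^2 * (Pr lam a m (a k) * Pr lam a m (a (Suc k)))"
    using k by (simp add: Fr_at_a power2_eq_square algebra_simps)
  ultimately show "Fr lam a m b (a k) * Fr lam a m b (a (Suc k)) < 0"
    using that by (simp add: mult_pos_neg)
qed

lemma Pr_G:
  assumes "\<forall>k\<in>{1..m}. x \<noteq> a k"
  shows "Pr lam a m x = Qr a m x * (\<Sum>k\<in>{1..m}. lam k / (x - a k))"
proof -
  have Q: "Qr a m x \<noteq> 0" using assms by (simp add: Qr_def)
  have "(\<Sum>k\<in>{1..m}. lam k / (x - a k)) = Pr lam a m x / Qr a m x"
    unfolding Pr_def Qr_def by (rule frac_sum) (use assms in auto)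
  then show ?thesis using Q by simp
qed

lemma end_pos:
  assumes b: "b > 0"
  shows "Fr lam a m b (a m + 2 * b) > 0"
proof -
  define x0 where "x0 = a m + 2 * b"
  have d: "x0 - a k \<ge> 2 * b" if "k \<in> {1..m}" for k
    using a_le[of k m] that by (auto simp: x0_def)
  have ne: "\<forall>k\<in>{1..m}. x0 \<noteq> a k" using d b by force
  define G where "G = (\<Sum>k\<in>{1..m}. lam k / (x0 - a k))"
  have "G \<le> (\<Sum>k\<in>{1..m}. lam k / (2 * b))"
    unfolding G_def
  proof (rule sum_mono)
    fix k assume k: "k \<in> {1..m}"
    have lk: "0 < lam k" using lpos k by blast
    have pp: "0 < (x0 - a k) * (2 * b)" using d[OF k] b by simp
    show "lam k / (x0 - a k) \<le> lam k / (2 * b)"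
      by (rule divide_left_mono[OF d[OF k] _ pp]) (use lk in simp)
  qed
  also have "\<dots> = 1 / (2 * b)" using lsum by (simp add: sum_divide_distrib[symmetric])
  finally have "b * G \<le> b * (1 / (2 * b))" using b by (intro mult_left_mono) auto
  then have bG: "1 - b * G \<ge> 1 / 2" using b by simp
  have Q: "Qr a m x0 > 0" unfolding Qr_def using d b by (intro prod_pos) force
  have "Fr lam a m b x0 = Qr a m x0 * (1 - b * G)"
    unfolding Fr_def Pr_G[OF ne] G_def by (simp add: algebra_simps)
  also have "\<dots> > 0" using Q bG by (intro mult_pos_pos) auto
  finally show ?thesis by (simp add: x0_def)
qed

lemma end_neg:
  assumes b: "b < 0"
  shows "Fr lam a m b (a 1 + 2 * b) * Fr lam a m b (a 1) < 0"
proof -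
  define x0 where "x0 = a 1 + 2 * b"
  have d: "a k - x0 \<ge> - 2 * b" if "k \<in> {1..m}" for k
    using a_le[of 1 k] that by (auto simp: x0_def)
  have ne: "\<forall>k\<in>{1..m}. x0 \<noteq> a k" using d b by force
  define G where "G = (\<Sum>k\<in>{1..m}. lam k / (x0 - a k))"
  have "(\<Sum>k\<in>{1..m}. lam k / (2 * b)) \<le> G"
    unfolding G_def
  proof (rule sum_mono)
    fix k assume k: "k \<in> {1..m}"
    have lk: "0 < lam k" using lpos k by blast
    have p: "0 < a k - x0" using d[OF k] b by linarith
    have pp: "0 < (a k - x0) * (- 2 * b)" by (rule mult_pos_pos) (use p b in linarith)+
    have "lam k / (a k - x0) \<le> lam k / (- 2 * b)"
      by (rule divide_left_mono[OF _ _ pp]) (use d[OF k] lk in simp_all)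
    moreover have "lam k / (x0 - a k) = - (lam k / (a k - x0))"
      by (metis minus_diff_eq divide_minus_right)
    moreover have "lam k / (- 2 * b) = - (lam k / (2 * b))"
      by (metis mult_minus_left divide_minus_right)
    ultimately show "lam k / (2 * b) \<le> lam k / (x0 - a k)" by linarith
  qed
  moreover have "(\<Sum>k\<in>{1..m}. lam k / (2 * b)) = 1 / (2 * b)" using lsum by (simp add: sum_divide_distrib[symmetric])
  ultimately have "b * G \<le> b * (1 / (2 * b))" using b by (intro mult_left_mono_neg) auto
  then have bG: "1 - b * G \<ge> 1 / 2" using b by simp
  have allneg: "{j\<in>{1..m}. x0 - a j < 0} = {1..m}" using d b by force
  have Q: "0 < (-1) ^ m * Qr a m x0"
    using prod_sign[of "{1..m}" "\<lambda>j. x0 - a j"] allneg d b unfolding Qr_def by force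
  have "Fr lam a m b x0 = Qr a m x0 * (1 - b * G)"
    unfolding Fr_def Pr_G[OF ne] G_def by (simp add: algebra_simps)
  then have F0: "0 < (-1) ^ m * Fr lam a m b x0" using Q bG by (simp add: mult.assoc[symmetric])
  have m1': "m - 1 + 1 = m" using m1 by simp
  have P1: "0 < (-1) ^ (m - 1) * Pr lam a m (a 1)" using Pr_at_a_sign[of 1] m1 by simp
  have "(-1) ^ m * Fr lam a m b (a 1) = b * ((-1) ^ (m - 1) * Pr lam a m (a 1))"
  proof -
    have "(-1::real) ^ m = - ((-1) ^ (m - 1))" using m1' by (metis power_add power_one_right mult_minus1_right)
    then show ?thesis using Fr_at_a[of 1] m1 by simp
  qed
  then have F1: "(-1) ^ m * Fr lam a m b (a 1) < 0" using P1 b by (simp add: mult_neg_pos)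
  have "((-1) ^ m * Fr lam a m b x0) * ((-1) ^ m * Fr lam a m b (a 1)) < 0"
    using F0 F1 by (simp add: mult_pos_neg)
  also have "((-1) ^ m * Fr lam a m b x0) * ((-1) ^ m * Fr lam a m b (a 1)) =
             ((-1) ^ m * (-1) ^ m) * (Fr lam a m b x0 * Fr lam a m b (a 1))" by (simp add: algebra_simps)
  finally show ?thesis by (simp only: neg1_sq mult_1_left x0_def)
qed

lemma roots_exist:
  assumes "b \<noteq> 0"
  shows "\<exists>bs. (\<forall>k\<in>{1..<m}. bs k < bs (Suc k)) \<and> (\<forall>i\<in>{1..m}. Fr lam a m b (bs i) = 0) \<and>
     ((b < 0 \<and> (\<forall>k\<in>{1..m}. bs k < a k) \<and> (\<forall>k\<in>{1..<m}. a k < bs (Suc k))) \<or>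
      (b > 0 \<and> (\<forall>k\<in>{1..m}. a k < bs k) \<and> (\<forall>k\<in>{1..<m}. bs k < a (Suc k))))"
proof (cases "b > 0")
  case True
  have "\<forall>k\<in>{1..m}. \<exists>r. a k < r \<and> r < (if k < m then a (Suc k) else a m + 2 * b) \<and> Fr lam a m b r = 0"
  proof
    fix k assume k: "k \<in> {1..m}"
    show "\<exists>r. a k < r \<and> r < (if k < m then a (Suc k) else a m + 2 * b) \<and> Fr lam a m b r = 0"
    proof (cases "k < m")
      case True
      then show ?thesis using root_between[of k b] k assms by auto
    next
      case False
      then have km: "k = m" using k by auto
      have "0 < (-1) ^ (m - m) * Pr lam a m (a m)" using Pr_at_a_sign[of m] m1 by simp
      then have "Fr lam a m b (a m) < 0" using Fr_at_a[of m b] m1 \<open>b > 0\<close> by (simp add: mult_pos_pos)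
      moreover have "Fr lam a m b (a m + 2 * b) > 0" using end_pos \<open>b > 0\<close> by blast
      ultimately have "Fr lam a m b (a m) * Fr lam a m b (a m + 2 * b) < 0" by (simp add: mult_neg_pos)
      then have "\<exists>r. a m < r \<and> r < a m + 2 * b \<and> Fr lam a m b r = 0"
        using ivt_root[of "a m" "a m + 2 * b" b] \<open>b > 0\<close> by simp
      then show ?thesis using km by simp
    qed
  qed
  then obtain bs where bs: "\<forall>k\<in>{1..m}. a k < bs k \<and> bs k < (if k < m then a (Suc k) else a m + 2 * b) \<and> Fr lam a m b (bs k) = 0"
    by (metis (no_types, lifting) bchoice)
  have up: "\<forall>k\<in>{1..<m}. bs k < a (Suc k)"
  proof
    fix k assume k: "k \<in> {1..<m}"
    then have "k \<in> {1..m}" "k < m" by auto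
    then show "bs k < a (Suc k)" using bspec[OF bs, of k] by auto
  qed
  have inc: "\<forall>k\<in>{1..<m}. bs k < bs (Suc k)"
  proof
    fix k assume k: "k \<in> {1..<m}"
    have "bs k < a (Suc k)" using up k by auto
    also have "a (Suc k) < bs (Suc k)" using bs k by auto
    finally show "bs k < bs (Suc k)" .
  qed
  show ?thesis using inc bs up True by (intro exI[of _ bs]) auto
next
  case False
  then have bn: "b < 0" using assms by auto
  have "\<forall>k\<in>{1..m}. \<exists>r. (if k = 1 then a 1 + 2 * b else a (k - 1)) < r \<and> r < a k \<and> Fr lam a m b r = 0"
  proof
    fix k assume k: "k \<in> {1..m}"
    show "\<exists>r. (if k = 1 then a 1 + 2 * b else a (k - 1)) < r \<and> r < a k \<and> Fr lam a m b r = 0"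
    proof (cases "k = 1")
      case True
      have "\<exists>r. a 1 + 2 * b < r \<and> r < a 1 \<and> Fr lam a m b r = 0"
        using ivt_root[of "a 1 + 2 * b" "a 1" b] end_neg[of b] bn by simp
      then show ?thesis using True by simp
    next
      case False
      then have k1: "k - 1 \<in> {1..<m}" "Suc (k - 1) = k" using k by auto
      show ?thesis using root_between[OF k1(1) assms] k1 False by simp
    qed
  qed
  then obtain bs where bs: "\<forall>k\<in>{1..m}. (if k = 1 then a 1 + 2 * b else a (k - 1)) < bs k \<and> bs k < a k \<and> Fr lam a m b (bs k) = 0"
    by (metis (no_types, lifting) bchoice)
  have lo: "\<forall>k\<in>{1..<m}. a k < bs (Suc k)"
  proof
    fix k assume k: "k \<in> {1..<m}"
    then have "Suc k \<in> {1..m}" "Suc k \<noteq> 1" by auto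
    then show "a k < bs (Suc k)" using bs by fastforce
  qed
  have inc: "\<forall>k\<in>{1..<m}. bs k < bs (Suc k)"
  proof
    fix k assume k: "k \<in> {1..<m}"
    have "bs k < a k" using bs k by auto
    also have "a k < bs (Suc k)" using lo k by auto
    finally show "bs k < bs (Suc k)" .
  qed
  show ?thesis using inc bs lo bn by (intro exI[of _ bs]) auto
qed

lemma mu_pos:
  assumes inc: "\<forall>k\<in>{1..<m}. bs k < bs (Suc k)" and i: "i \<in> {1..m}"
    and il: "(b < 0 \<and> (\<forall>k\<in>{1..m}. bs k < a k) \<and> (\<forall>k\<in>{1..<m}. a k < bs (Suc k))) \<or>
      (b > 0 \<and> (\<forall>k\<in>{1..m}. a k < bs k) \<and> (\<forall>k\<in>{1..<m}. bs k < a (Suc k)))"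
  shows "0 < (\<Prod>k=1..m. bs i - a k) / (b * (\<Prod>k\<in>{1..m} - {i}. bs i - bs k))"
proof -
  define N where "N = (\<Prod>k=1..m. bs i - a k)"
  define D where "D = (\<Prod>k\<in>{1..m} - {i}. bs i - bs k)"
  define e where "e = m - i"
  have Dne: "\<forall>k\<in>{1..m}-{i}. bs i - bs k \<noteq> 0"
  proof
    fix k assume k: "k \<in> {1..m}-{i}"
    then have "k < i \<or> i < k" by auto
    then show "bs i - bs k \<noteq> 0" using mono_seq[OF inc, of k i] mono_seq[OF inc, of i k] k i by auto
  qed
  have "{k\<in>{1..m}-{i}. bs i - bs k < 0} = {i<..m}"
  proof (intro equalityI subsetI)
    fix k assume "k \<in> {k\<in>{1..m}-{i}. bs i - bs k < 0}"
    then have k: "k \<in> {1..m}" "k \<noteq> i" "bs i < bs k" by auto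
    have "\<not> k < i" using mono_seq[OF inc, of k i] k i by auto
    then show "k \<in> {i<..m}" using k by auto
  next
    fix k assume k: "k \<in> {i<..m}"
    then show "k \<in> {k\<in>{1..m}-{i}. bs i - bs k < 0}" using mono_seq[OF inc, of i k] i by auto
  qed
  then have Ds: "0 < (-1) ^ e * D" using prod_sign[of "{1..m}-{i}" "\<lambda>k. bs i - bs k"] Dne
    by (simp add: D_def e_def)
  have split: "N / (b * D) = ((-1) ^ e * N) / (b * ((-1) ^ e * D))"
    by (simp add: field_simps)
  from il show ?thesis
  proof
    assume h: "b < 0 \<and> (\<forall>k\<in>{1..m}. bs k < a k) \<and> (\<forall>k\<in>{1..<m}. a k < bs (Suc k))"
    have Nne: "\<forall>k\<in>{1..m}. bs i - a k \<noteq> 0"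
    proof
      fix k assume k: "k \<in> {1..m}"
      show "bs i - a k \<noteq> 0"
      proof (cases "k < i")
        case True
        have "a k \<le> a (i - 1)" using a_le[of k "i - 1"] True k i by auto
        also have "a (i - 1) < bs i"
        proof -
          have ii: "i - 1 \<in> {1..<m}" "Suc (i - 1) = i" using True k i by auto
          show ?thesis using bspec[OF conjunct2[OF conjunct2[OF h]] ii(1)] ii(2) by simp
        qed
        finally show ?thesis by simp
      next
        case False
        have "bs i < a i" using h i by auto
        also have "a i \<le> a k" using a_le[of i k] False k i by auto
        finally show ?thesis by simp
      qed
    qed
    have "{k\<in>{1..m}. bs i - a k < 0} = {i..m}"
    proof (intro equalityI subsetI)
      fix k assume "k \<in> {k\<in>{1..m}. bs i - a k < 0}"
      then have k: "k \<in> {1..m}" "bs i < a k" by auto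
      have "\<not> k < i"
      proof
        assume ki: "k < i"
        have "a k \<le> a (i - 1)" using a_le[of k "i - 1"] ki k i by auto
        also have "a (i - 1) < bs i"
        proof -
          have ii: "i - 1 \<in> {1..<m}" "Suc (i - 1) = i" using ki k i by auto
          show ?thesis using bspec[OF conjunct2[OF conjunct2[OF h]] ii(1)] ii(2) by simp
        qed
        finally show False using k by simp
      qed
      then show "k \<in> {i..m}" using k by auto
    next
      fix k assume k: "k \<in> {i..m}"
      have "bs i < a i" using h i by auto
      also have "a i \<le> a k" using a_le[of i k] k i by auto
      finally show "k \<in> {k\<in>{1..m}. bs i - a k < 0}" using k i by auto
    qed
    moreover have "card {i..m} = Suc e" using i by (simp add: e_def Suc_diff_le)
    ultimately have "0 < (-1) ^ Suc e * N" using prod_sign[of "{1..m}" "\<lambda>k. bs i - a k"] Nne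
      by (simp add: N_def)
    then have Ns: "(-1) ^ e * N < 0" by simp
    have "0 < ((-1) ^ e * N) / (b * ((-1) ^ e * D))"
    proof -
      have bn: "b < 0" using h by blast
      have den: "b * ((-1) ^ e * D) < 0" by (rule mult_neg_pos[OF bn Ds])
      show ?thesis by (rule divide_neg_neg[OF Ns den])
    qed
    then show ?thesis using split by (simp add: N_def D_def)
  next
    assume h: "b > 0 \<and> (\<forall>k\<in>{1..m}. a k < bs k) \<and> (\<forall>k\<in>{1..<m}. bs k < a (Suc k))"
    have Nne: "\<forall>k\<in>{1..m}. bs i - a k \<noteq> 0"
    proof
      fix k assume k: "k \<in> {1..m}"
      show "bs i - a k \<noteq> 0"
      proof (cases "k \<le> i")
        case True
        have "a k \<le> a i" using a_le[of k i] True k i by auto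
        also have "a i < bs i" using h i by auto
        finally show ?thesis by simp
      next
        case False
        have "bs i < a (Suc i)" using h i False k by auto
        also have "a (Suc i) \<le> a k" using a_le[of "Suc i" k] False k i by auto
        finally show ?thesis by simp
      qed
    qed
    have "{k\<in>{1..m}. bs i - a k < 0} = {i<..m}"
    proof (intro equalityI subsetI)
      fix k assume "k \<in> {k\<in>{1..m}. bs i - a k < 0}"
      then have k: "k \<in> {1..m}" "bs i < a k" by auto
      have "\<not> k \<le> i"
      proof
        assume ki: "k \<le> i"
        have "a k \<le> a i" using a_le[of k i] ki k i by auto
        also have "a i < bs i" using h i by auto
        finally show False using k by simp
      qed
      then show "k \<in> {i<..m}" using k by auto
    next
      fix k assume k: "k \<in> {i<..m}"
      have "bs i < a (Suc i)" using h i k by auto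
      also have "a (Suc i) \<le> a k" using a_le[of "Suc i" k] k i by auto
      finally show "k \<in> {k\<in>{1..m}. bs i - a k < 0}" using k i by auto
    qed
    then have Ns: "0 < (-1) ^ e * N" using prod_sign[of "{1..m}" "\<lambda>k. bs i - a k"] Nne
      by (simp add: N_def e_def)
    have "0 < ((-1) ^ e * N) / (b * ((-1) ^ e * D))"
    proof -
      have bp: "b > 0" using h by blast
      have den: "b * ((-1) ^ e * D) > 0" by (rule mult_pos_pos[OF bp Ds])
      show ?thesis by (rule divide_pos_pos[OF Ns den])
    qed
    then show ?thesis using split by (simp add: N_def D_def)
  qed
qed

end

lemma cG_DD:
  assumes "\<forall>k\<in>{1..m}. 0 \<le> w k"
  shows "cauchy_G (DD w x m) z = (\<Sum>k\<in>{1..m}. of_real (w k) / (z - of_real (x k)))"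
proof -
  have meas: "(\<lambda>t. 1 / (z - complex_of_real t)) \<in> borel_measurable borel" by measurable
  show ?thesis unfolding cauchy_G_def
    by (subst integral_DD[OF meas assms]) (simp add: scaleR_conv_of_real)
qed

lemma cG_return: "cauchy_G (return borel b) z = 1 / (z - of_real b)"
proof -
  have meas: "(\<lambda>t. 1 / (z - complex_of_real t)) \<in> borel_measurable borel" by measurable
  show ?thesis unfolding cauchy_G_def by (subst integral_return[OF _ meas]) auto
qed

lemma cH_return: "cauchy_H (return borel b) z = z - of_real b"
  by (simp add: cauchy_H_def cG_return)

lemma Im_frac_sum_neg:
  fixes m :: nat and w x :: "nat \<Rightarrow> real"
  assumes m1: "1 \<le> m" and w: "\<forall>k\<in>{1..m}. 0 < w k" and z: "0 < Im z"
  shows "Im (\<Sum>k\<in>{1..m}. of_real (w k) / (z - of_real (x k))) < 0"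
proof -
  have t: "0 < - Im (of_real (w k) / (z - of_real (x k)))" if k: "k \<in> {1..m}" for k
  proof -
    have nz: "z - of_real (x k) \<noteq> 0" using z by (auto simp: complex_eq_iff)
    have "Im (of_real (w k) / (z - of_real (x k))) = - (w k * Im z) / (norm (z - of_real (x k)))\<^sup>2"
      by (simp add: Im_divide')
    moreover have "0 < w k * Im z" using w k z by simp
    moreover have "0 < (norm (z - of_real (x k)))\<^sup>2" using nz by simp
    ultimately show ?thesis by (simp add: divide_pos_pos)
  qed
  have "0 < (\<Sum>k\<in>{1..m}. - Im (of_real (w k) / (z - of_real (x k))))"
    by (rule sum_pos) (use m1 t in auto)
  then show ?thesis by (simp add: Im_sum sum_negf)
qed

lemma mono_conv_char:
  assumes m1: "1 \<le> m" and w: "\<forall>k\<in>{1..m}. 0 < w k" "(\<Sum>k=1..m. w k) = 1"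
    and inc: "\<forall>k\<in>{1..<m}. x k < x (Suc k)"
    and H: "\<forall>z. 0 < Im z \<longrightarrow> cauchy_H (DD w x m) z = cauchy_H \<mu> (cauchy_H \<nu> z)"
  shows "mono_conv \<mu> \<nu> = DD w x m"
  unfolding mono_conv_def
proof (rule the_equality)
  have w0: "\<forall>k\<in>{1..m}. 0 \<le> w k" using w by auto
  show "prob_space (DD w x m) \<and> sets (DD w x m) = sets borel \<and>
    (\<forall>z. 0 < Im z \<longrightarrow> cauchy_H (DD w x m) z = cauchy_H \<mu> (cauchy_H \<nu> z))"
    using prob_DD[OF w0 w(2)] H by (simp add: DD_def)
  fix \<rho> assume r: "prob_space \<rho> \<and> sets \<rho> = sets borel \<and>
    (\<forall>z. 0 < Im z \<longrightarrow> cauchy_H \<rho> z = cauchy_H \<mu> (cauchy_H \<nu> z))"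
  have G: "\<forall>z. 0 < Im z \<longrightarrow> cauchy_G \<rho> z = cauchy_G (DD w x m) z"
  proof (intro allI impI)
    fix z :: complex assume "0 < Im z"
    then have "cauchy_H \<rho> z = cauchy_H (DD w x m) z" using r H by simp
    then show "cauchy_G \<rho> z = cauchy_G (DD w x m) z" by (simp add: cauchy_H_def)
  qed
  show "\<rho> = DD w x m"
    by (rule unique_DD) (use r w mono_seq_inj[OF inc] G in auto)
qed

lemma atoms_DD: "atoms_of (DD w x m) \<subseteq> x ` {1..m}"
proof
  fix y assume y: "y \<in> atoms_of (DD w x m)"
  show "y \<in> x ` {1..m}"
  proof (rule ccontr)
    assume n: "y \<notin> x ` {1..m}"
    have "emeasure (DD w x m) {y} = (\<Sum>k\<in>{1..m}. ennreal (w k) * indicator {y} (x k))"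
      by (rule emeasure_DD) simp
    also have "\<dots> = 0" using n by (intro sum.neutral) (auto simp: indicator_def)
    finally show False using y by (simp add: atoms_of_def)
  qed
qed

definition Qpol :: "(nat \<Rightarrow> real) \<Rightarrow> nat \<Rightarrow> complex poly" where
  "Qpol a m = prodlin (\<lambda>k. complex_of_real (a k)) {1..m}"
definition Ppol :: "(nat \<Rightarrow> real) \<Rightarrow> (nat \<Rightarrow> real) \<Rightarrow> nat \<Rightarrow> complex poly" where
  "Ppol lam a m = (\<Sum>k\<in>{1..m}. smult (complex_of_real (lam k)) (prodlin (\<lambda>j. complex_of_real (a j)) ({1..m}-{k})))"

lemma poly_Qpol: "poly (Qpol a m) z = (\<Prod>k\<in>{1..m}. z - of_real (a k))"
  by (simp add: Qpol_def)
lemma poly_Ppol: "poly (Ppol lam a m) z = (\<Sum>k\<in>{1..m}. of_real (lam k) * (\<Prod>j\<in>{1..m}-{k}. z - of_real (a j)))"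
  by (simp add: Ppol_def poly_sum)
lemma poly_Qpol_real: "poly (Qpol a m) (of_real x) = of_real (Qr a m x)"
  by (simp add: poly_Qpol Qr_def)
lemma poly_Ppol_real: "poly (Ppol lam a m) (of_real x) = of_real (Pr lam a m x)"
  by (simp add: poly_Ppol Pr_def)

lemma degree_Qpol: "degree (Qpol a m) = m" by (simp add: Qpol_def degree_prodlin)
lemma coeff_Qpol: "coeff (Qpol a m) m = 1" using lead_prodlin[of "{1..m}"] by (simp add: Qpol_def)

lemma degree_Ppol: "degree (Ppol lam a m) \<le> m - 1"
  unfolding Ppol_def
proof (rule degree_sum_le)
  fix k assume k: "k \<in> {1..m}"
  have "degree (smult (complex_of_real (lam k)) (prodlin (\<lambda>j. complex_of_real (a j)) ({1..m}-{k})))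
        \<le> degree (prodlin (\<lambda>j. complex_of_real (a j)) ({1..m}-{k}))" by (rule degree_smult_le)
  also have "\<dots> = m - 1" using k by (simp add: degree_prodlin)
  finally show "degree (smult (complex_of_real (lam k)) (prodlin (\<lambda>j. complex_of_real (a j)) ({1..m}-{k}))) \<le> m - 1" .
qed simp

lemma coeff_Ppol: "coeff (Ppol lam a m) (m - 1) = of_real (\<Sum>k\<in>{1..m}. lam k)"
proof -
  have "coeff (Ppol lam a m) (m - 1) = (\<Sum>k\<in>{1..m}. of_real (lam k) * coeff (prodlin (\<lambda>j. complex_of_real (a j)) ({1..m}-{k})) (m - 1))"
    by (simp add: Ppol_def coeff_sum)
  also have "\<dots> = (\<Sum>k\<in>{1..m}. of_real (lam k))"
  proof (rule sum.cong[OF refl])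
    fix k assume k: "k \<in> {1..m}"
    then have "card ({1..m}-{k}) = m - 1" by simp
    then show "of_real (lam k) * coeff (prodlin (\<lambda>j. complex_of_real (a j)) ({1..m}-{k})) (m - 1) = of_real (lam k)"
      using lead_prodlin[of "{1..m}-{k}" "\<lambda>j. complex_of_real (a j)"] by simp
  qed
  finally show ?thesis by simp
qed

context
  fixes m :: nat and lam a :: "nat \<Rightarrow> real"
  assumes m1: "1 \<le> m" and lpos: "\<forall>k\<in>{1..m}. 0 < lam k" and lsum: "(\<Sum>k=1..m. lam k) = 1"
    and amono: "\<forall>k\<in>{1..<m}. a k < a (Suc k)"
begin

lemma G_nu:
  assumes z: "0 < Im z"
  shows "cauchy_G (DD lam a m) z = poly (Ppol lam a m) z / poly (Qpol a m) z"
    and "cauchy_G (DD lam a m) z \<noteq> 0" and "poly (Ppol lam a m) z \<noteq> 0" and "poly (Qpol a m) z \<noteq> 0"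
proof -
  have l0: "\<forall>k\<in>{1..m}. 0 \<le> lam k" using lpos by auto
  have ne: "\<forall>k\<in>{1..m}. z \<noteq> complex_of_real (a k)" using z by auto
  show G: "cauchy_G (DD lam a m) z = poly (Ppol lam a m) z / poly (Qpol a m) z"
    unfolding cG_DD[OF l0] poly_Ppol poly_Qpol by (rule frac_sum) (use ne in auto)
  show G0: "cauchy_G (DD lam a m) z \<noteq> 0"
  proof
    assume "cauchy_G (DD lam a m) z = 0"
    then have "Im (\<Sum>k\<in>{1..m}. of_real (lam k) / (z - of_real (a k))) = 0"
      using cG_DD[OF l0, of a z] by simp
    then show False using Im_frac_sum_neg[OF m1 lpos z, of a] by simp
  qed
  show "poly (Ppol lam a m) z \<noteq> 0" using G G0 by auto
  show "poly (Qpol a m) z \<noteq> 0" using G G0 by auto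
qed

lemma main_b:
  assumes b: "b \<noteq> 0" and inc: "\<forall>k\<in>{1..<m}. bs k < bs (Suc k)"
    and roots: "\<forall>i\<in>{1..m}. Fr lam a m b (bs i) = 0"
    and il: "(b < 0 \<and> (\<forall>k\<in>{1..m}. bs k < a k) \<and> (\<forall>k\<in>{1..<m}. a k < bs (Suc k))) \<or>
      (b > 0 \<and> (\<forall>k\<in>{1..m}. a k < bs k) \<and> (\<forall>k\<in>{1..<m}. bs k < a (Suc k)))"
    and mu: "mu = (\<lambda>i. (\<Prod>k=1..m. bs i - a k) / (b * (\<Prod>k\<in>{1..m} - {i}. bs i - bs k)))"
  shows "(\<Sum>i=1..m. mu i) = 1"
    and "\<forall>z. 0 < Im z \<longrightarrow> cauchy_H (DD mu bs m) z = cauchy_H (return borel b) (cauchy_H (DD lam a m) z)"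
proof -
  define c where "c i = complex_of_real (bs i)" for i
  have injr: "inj_on bs {1..m}" by (rule mono_seq_inj[OF inc])
  have inj: "inj_on c {1..m}"
  proof (rule inj_onI)
    fix i j assume ij: "i \<in> {1..m}" "j \<in> {1..m}" "c i = c j"
    then have "bs i = bs j" by (simp add: c_def)
    then show "i = j" by (rule inj_onD[OF injr _ ij(1,2)])
  qed
  define Fp where "Fp = Qpol a m - smult (of_real b) (Ppol lam a m)"
  have Fp: "Fp = prodlin c {1..m}"
  proof (rule factor_monic[OF inj])
    have "degree (Ppol lam a m) \<le> m" using degree_Ppol[of lam a m] by simp
    then have "degree (smult (of_real b) (Ppol lam a m)) \<le> m" using degree_smult_le order.trans by blast
    then show "degree Fp \<le> m" unfolding Fp_def
      by (intro degree_diff_le) (simp_all add: degree_Qpol)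
    have "coeff (Ppol lam a m) m = 0"
      by (rule coeff_eq_0) (use degree_Ppol[of lam a m] m1 in simp)
    then show "coeff Fp m = 1" unfolding Fp_def by (simp add: coeff_Qpol)
    show "\<forall>i\<in>{1..m}. poly Fp (c i) = 0"
    proof
      fix i assume i: "i \<in> {1..m}"
      have "poly Fp (c i) = of_real (Fr lam a m b (bs i))"
        by (simp add: Fp_def c_def poly_Qpol_real poly_Ppol_real Fr_def)
      then show "poly Fp (c i) = 0" using roots i by simp
    qed
  qed
  have mu_eq: "mu i = Pr lam a m (bs i) / (\<Prod>k\<in>{1..m} - {i}. bs i - bs k)" if i: "i \<in> {1..m}" for i
  proof -
    have "Qr a m (bs i) = b * Pr lam a m (bs i)" using roots i by (simp add: Fr_def)
    then show ?thesis using b by (simp add: mu Qr_def)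
  qed
  have degP: "degree (Ppol lam a m) < m" using degree_Ppol[of lam a m] m1 by simp
  have L: "Ppol lam a m = (\<Sum>i\<in>{1..m}. smult (of_real (mu i)) (prodlin c ({1..m}-{i})))"
  proof -
    have "Ppol lam a m = (\<Sum>i\<in>{1..m}. smult (poly (Ppol lam a m) (c i) / (\<Prod>k\<in>{1..m}-{i}. c i - c k)) (prodlin c ({1..m}-{i})))"
      by (rule lagrange[OF inj degP])
    also have "\<dots> = (\<Sum>i\<in>{1..m}. smult (of_real (mu i)) (prodlin c ({1..m}-{i})))"
    proof (rule sum.cong[OF refl])
      fix i assume i: "i \<in> {1..m}"
      have "poly (Ppol lam a m) (c i) / (\<Prod>k\<in>{1..m}-{i}. c i - c k) = of_real (mu i)"
        using mu_eq[OF i] by (simp add: c_def poly_Ppol_real)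
      then show "smult (poly (Ppol lam a m) (c i) / (\<Prod>k\<in>{1..m}-{i}. c i - c k)) (prodlin c ({1..m}-{i})) =
                 smult (of_real (mu i)) (prodlin c ({1..m}-{i}))" by simp
    qed
    finally show ?thesis .
  qed
  have "complex_of_real (\<Sum>i=1..m. mu i) = coeff (Ppol lam a m) (m - 1)"
  proof -
    have "coeff (Ppol lam a m) (m - 1) = (\<Sum>i\<in>{1..m}. of_real (mu i) * coeff (prodlin c ({1..m}-{i})) (m - 1))"
      by (subst L) (simp add: coeff_sum)
    also have "\<dots> = (\<Sum>i\<in>{1..m}. of_real (mu i))"
    proof (rule sum.cong[OF refl])
      fix i assume i: "i \<in> {1..m}"
      then have "card ({1..m}-{i}) = m - 1" by simp
      then show "of_real (mu i) * coeff (prodlin c ({1..m}-{i})) (m - 1) = of_real (mu i)"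
        using lead_prodlin[of "{1..m}-{i}" c] by simp
    qed
    finally show ?thesis by simp
  qed
  then have "complex_of_real (\<Sum>i=1..m. mu i) = complex_of_real (\<Sum>k=1..m. lam k)"
    using coeff_Ppol[of lam a m] by metis
  then have "(\<Sum>i=1..m. mu i) = (\<Sum>k=1..m. lam k)" by (simp only: of_real_eq_iff)
  then show "(\<Sum>i=1..m. mu i) = 1" using lsum by simp
  show "\<forall>z. 0 < Im z \<longrightarrow> cauchy_H (DD mu bs m) z = cauchy_H (return borel b) (cauchy_H (DD lam a m) z)"
  proof (intro allI impI)
    fix z :: complex assume z: "0 < Im z"
    have mu0: "\<forall>i\<in>{1..m}. 0 \<le> mu i"
      using mu_pos[OF m1 lpos lsum amono inc _ il] by (auto simp: mu less_imp_le)
    have ne: "\<forall>i\<in>{1..m}. z \<noteq> c i" using z by (auto simp: c_def)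
    have "cauchy_G (DD mu bs m) z = (\<Sum>i\<in>{1..m}. of_real (mu i) / (z - c i))"
      by (simp add: cG_DD[OF mu0] c_def)
    also have "\<dots> = (\<Sum>i\<in>{1..m}. of_real (mu i) * (\<Prod>k\<in>{1..m}-{i}. z - c k)) / (\<Prod>k\<in>{1..m}. z - c k)"
      by (rule frac_sum) (use ne in auto)
    also have "\<dots> = poly (Ppol lam a m) z / poly Fp z"
      by (subst L, subst Fp) (simp add: poly_sum)
    finally have G1: "cauchy_G (DD mu bs m) z = poly (Ppol lam a m) z / poly Fp z" .
    have P0: "poly (Ppol lam a m) z \<noteq> 0" by (rule G_nu(3)[OF z])
    have "cauchy_H (return borel b) (cauchy_H (DD lam a m) z) = poly (Qpol a m) z / poly (Ppol lam a m) z - of_real b"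
      unfolding cH_return by (simp add: cauchy_H_def G_nu(1)[OF z])
    also have "\<dots> = poly Fp z / poly (Ppol lam a m) z"
      using P0 by (simp add: Fp_def field_simps)
    finally show "cauchy_H (DD mu bs m) z = cauchy_H (return borel b) (cauchy_H (DD lam a m) z)"
      by (simp add: cauchy_H_def G1)
  qed
qed

end

context
  fixes m :: nat and lam a :: "nat \<Rightarrow> real"
  assumes m1: "1 \<le> m" and lpos: "\<forall>k\<in>{1..m}. 0 < lam k" and lsum: "(\<Sum>k=1..m. lam k) = 1"
    and amono: "\<forall>k\<in>{1..<m}. a k < a (Suc k)"
begin

lemma part1:
  assumes b: "b \<noteq> 0"
  shows "\<exists>bs mu :: nat \<Rightarrow> real.
               (\<forall>k\<in>{1..<m}. bs k < bs (Suc k)) \<and>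
               (\<forall>k\<in>{1..m}. 0 < mu k) \<and>
               mono_conv (return borel b) (atoms_measure lam a m) = atoms_measure mu bs m \<and>
               (((\<forall>k\<in>{1..m}. bs k < a k) \<and> (\<forall>k\<in>{1..<m}. a k < bs (Suc k))) \<or>
                ((\<forall>k\<in>{1..m}. a k < bs k) \<and> (\<forall>k\<in>{1..<m}. bs k < a (Suc k)))) \<and>
               (\<forall>i\<in>{1..m}. mu i = (\<Prod>k=1..m. bs i - a k) /
                                    (b * (\<Prod>k\<in>{1..m} - {i}. bs i - bs k))) \<and>
               (\<forall>i\<in>{1..m}. Fr lam a m b (bs i) = 0)"
proof -
  obtain bs where inc: "\<forall>k\<in>{1..<m}. bs k < bs (Suc k)" and roots: "\<forall>i\<in>{1..m}. Fr lam a m b (bs i) = 0"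
    and il: "(b < 0 \<and> (\<forall>k\<in>{1..m}. bs k < a k) \<and> (\<forall>k\<in>{1..<m}. a k < bs (Suc k))) \<or>
      (b > 0 \<and> (\<forall>k\<in>{1..m}. a k < bs k) \<and> (\<forall>k\<in>{1..<m}. bs k < a (Suc k)))"
    using roots_exist[OF m1 lpos lsum amono b] by blast
  define mu where "mu = (\<lambda>i. (\<Prod>k=1..m. bs i - a k) / (b * (\<Prod>k\<in>{1..m} - {i}. bs i - bs k)))"
  have mb: "(\<Sum>i=1..m. mu i) = 1"
    "\<forall>z. 0 < Im z \<longrightarrow> cauchy_H (DD mu bs m) z = cauchy_H (return borel b) (cauchy_H (DD lam a m) z)"
    using main_b[OF m1 lpos lsum amono b inc roots il mu_def] by auto
  have mp: "\<forall>k\<in>{1..m}. 0 < mu k"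
    using mu_pos[OF m1 lpos lsum amono inc _ il] by (simp add: mu_def)
  have mc: "mono_conv (return borel b) (DD lam a m) = DD mu bs m"
    by (rule mono_conv_char[OF m1 mp mb(1) inc mb(2)])
  show ?thesis
    apply (rule exI[of _ bs], rule exI[of _ mu])
    using inc mp mc il roots by (auto simp: atoms_measure_DD mu_def)
qed

lemma part_any:
  "\<exists>bs mu. mono_conv (return borel b) (atoms_measure lam a m) = atoms_measure mu bs m \<and>
      (\<forall>i\<in>{1..m}. Fr lam a m b (bs i) = 0)"
proof (cases "b = 0")
  case True
  have H: "\<forall>z. 0 < Im z \<longrightarrow> cauchy_H (DD lam a m) z = cauchy_H (return borel b) (cauchy_H (DD lam a m) z)"
    using True by (simp add: cH_return)
  have "mono_conv (return borel b) (DD lam a m) = DD lam a m"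
    by (rule mono_conv_char[OF m1 lpos lsum amono H])
  moreover have "\<forall>i\<in>{1..m}. Fr lam a m b (a i) = 0"
    using Fr_at_a[OF m1 lpos lsum amono] True by simp
  ultimately show ?thesis by (auto simp: atoms_measure_DD)
next
  case False
  then show ?thesis using part1[OF False] by blast
qed

lemma part2:
  assumes "b \<noteq> c"
  shows "atoms_of (mono_conv (return borel b) (atoms_measure lam a m)) \<inter>
            atoms_of (mono_conv (return borel c) (atoms_measure lam a m)) = {}"
proof -
  obtain bs mu where B: "mono_conv (return borel b) (atoms_measure lam a m) = atoms_measure mu bs m"
    "\<forall>i\<in>{1..m}. Fr lam a m b (bs i) = 0" using part_any by blast
  obtain cs nu where C: "mono_conv (return borel c) (atoms_measure lam a m) = atoms_measure nu cs m"
    "\<forall>i\<in>{1..m}. Fr lam a m c (cs i) = 0" using part_any by blast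
  show ?thesis
  proof (rule ccontr)
    assume "\<not> ?thesis"
    then obtain y where y: "y \<in> atoms_of (DD mu bs m)" "y \<in> atoms_of (DD nu cs m)"
      using B(1) C(1) by (auto simp: atoms_measure_DD)
    obtain i where i: "i \<in> {1..m}" "y = bs i" using atoms_DD y(1) by blast
    obtain j where j: "j \<in> {1..m}" "y = cs j" using atoms_DD y(2) by blast
    have fb: "Qr a m y = b * Pr lam a m y" using B(2) i by (simp add: Fr_def)
    have fc: "Qr a m y = c * Pr lam a m y" using C(2) j by (simp add: Fr_def)
    have "(b - c) * Pr lam a m y = b * Pr lam a m y - c * Pr lam a m y" by (simp add: left_diff_distrib)
    also have "\<dots> = 0" using fb fc by linarith
    finally have "(b - c) * Pr lam a m y = 0" .
    then have P0: "Pr lam a m y = 0" using assms by simp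
    then have "Qr a m y = 0" using fb by simp
    then obtain k where k: "k \<in> {1..m}" "y = a k" unfolding Qr_def by auto
    have "0 < (-1) ^ (m - k) * Pr lam a m (a k)" by (rule Pr_at_a_sign[OF m1 lpos lsum amono k(1)])
    then show False using P0 k by simp
  qed
qed

end

theorem theorem3p1:
  fixes m :: nat and lam a :: "nat \<Rightarrow> real"
  assumes "1 \<le> m"
    and "\<forall>k\<in>{1..m}. 0 < lam k"
    and "(\<Sum>k=1..m. lam k) = 1"
    and "\<forall>k\<in>{1..<m}. a k < a (Suc k)"
  shows "(\<forall>b::real. b \<noteq> 0 \<longrightarrow>
            (\<exists>bs mu :: nat \<Rightarrow> real.
               (\<forall>k\<in>{1..<m}. bs k < bs (Suc k)) \<and>
               (\<forall>k\<in>{1..m}. 0 < mu k) \<and>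
               mono_conv (return borel b) (atoms_measure lam a m) = atoms_measure mu bs m \<and>
               (((\<forall>k\<in>{1..m}. bs k < a k) \<and> (\<forall>k\<in>{1..<m}. a k < bs (Suc k))) \<or>
                ((\<forall>k\<in>{1..m}. a k < bs k) \<and> (\<forall>k\<in>{1..<m}. bs k < a (Suc k)))) \<and>
               (\<forall>i\<in>{1..m}. mu i = (\<Prod>k=1..m. bs i - a k) /
                                    (b * (\<Prod>k\<in>{1..m} - {i}. bs i - bs k))))) \<and>
         (\<forall>b c :: real. b \<noteq> c \<longrightarrow>
            atoms_of (mono_conv (return borel b) (atoms_measure lam a m)) \<inter>
            atoms_of (mono_conv (return borel c) (atoms_measure lam a m)) = {})"
proof (intro conjI allI impI)
  fix b :: real assume "b \<noteq> 0"
  then show "\<exists>bs mu :: nat \<Rightarrow> real.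
               (\<forall>k\<in>{1..<m}. bs k < bs (Suc k)) \<and>
               (\<forall>k\<in>{1..m}. 0 < mu k) \<and>
               mono_conv (return borel b) (atoms_measure lam a m) = atoms_measure mu bs m \<and>
               (((\<forall>k\<in>{1..m}. bs k < a k) \<and> (\<forall>k\<in>{1..<m}. a k < bs (Suc k))) \<or>
                ((\<forall>k\<in>{1..m}. a k < bs k) \<and> (\<forall>k\<in>{1..<m}. bs k < a (Suc k)))) \<and>
               (\<forall>i\<in>{1..m}. mu i = (\<Prod>k=1..m. bs i - a k) /
                                    (b * (\<Prod>k\<in>{1..m} - {i}. bs i - bs k)))"
    using part1[OF assms] by blast
next
  fix b c :: real assume "b \<noteq> c"
  then show "atoms_of (mono_conv (return borel b) (atoms_measure lam a m)) \<inter>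
            atoms_of (mono_conv (return borel c) (atoms_measure lam a m)) = {}"
    by (rule part2[OF assms])
qed


end
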